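(* If $K\in L^2(X\times X,\mu\times\mu)$ is $L^2(X,\mu)$-positive definite, then so is $E_n(K)$, for every $n\ge1$.
   Context: Standing setting: $X$ is a Hausdorff, locally compact, second countable topological space and $\mu$ is a non-degenerate, $\sigma$-finite, locally finite Borel measure on $X$. Fix an open cover of $X$ by open sets, each the interior of a compact set and of finite $\mu$-measure, and extract a countable subcover $\{\mathcal{A}_k\}_{k\ge 0}$. Let $\mathcal{P}_0$ be the partition of $X$ consisting of $\mathcal{A}_k\setminus\overline{\mathcal{A}_0\cup\dots\cup\mathcal{A}_{k-1}}$ and $\partial\mathcal{A}_k\setminus\overline{\mathcal{A}_0\cup\dots\cup\mathcal{A}_{k-1}}$, $k\ge0$. Fix a countable base $\{\mathcal{U}_n\}_{n\ge0}$ and set $\mathcal{P}_{n+1}=\{\mathcal{U}_n\cap A\}\cup\{(X\setminus\overline{\mathcal{U}_n})\cap A\}\cup\{\partial\mathcal{U}_n\cap A\}$, $A\in\mathcal{P}_n$. $O_n(x)$ is the unique element of $\mathcal{P}_n$ containing $x$; $\mathfrak{N}=\{x:\mu(O_m(x))=0\text{ for some }m\}$. For $u,v\in X\setminus\mathfrak{N}$, $E_n(K)(u,v)=\frac{1}{\mu(O_n(u))\mu(O_n(v))}\int_{O_n(u)}\int_{O_n(v)}K(x,y)\,d\mu(y)\,d\mu(x)$. A kernel $H\in L^2(X\times X,\mu\times\mu)$ is $L^2(X,\mu)$-positive definite if its integral operator $\mathcal{H}(f)=\int_X H(\cdot,y)f(y)\,d\mu(y)$ satisfies $\langle\mathcal{H}f,f\rangle\ge0$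 for all $f\in L^2(X,\mu)$. *)

theory Defs
  imports "HOL-Analysis.Analysis"
begin

definition P0 :: "(nat \<Rightarrow> 'a::topological_space set) \<Rightarrow> 'a set set" where
  "P0 A = (\<Union>k. {A k - closure (\<Union>j<k. A j), frontier (A k) - closure (\<Union>j<k. A j)})"

fun Part :: "(nat \<Rightarrow> 'a::topological_space set) \<Rightarrow> (nat \<Rightarrow> 'a set) \<Rightarrow> nat \<Rightarrow> 'a set set" where
  "Part A U 0 = P0 A"
| "Part A U (Suc n) =
     (\<Union>B\<in>Part A U n. {U n \<inter> B, (UNIV - closure (U n)) \<inter> B, frontier (U n) \<inter> B})"

definition Cell :: "(nat \<Rightarrow> 'a::topological_space set) \<Rightarrow> (nat \<Rightarrow> 'a set) \<Rightarrow> nat \<Rightarrow> 'a \<Rightarrow> 'a set" where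
  "Cell A U n x = (THE B. B \<in> Part A U n \<and> x \<in> B)"

definition Nset :: "'a::topological_space measure \<Rightarrow> (nat \<Rightarrow> 'a set) \<Rightarrow> (nat \<Rightarrow> 'a set) \<Rightarrow> 'a set" where
  "Nset M A U = {x. \<exists>m. emeasure M (Cell A U m x) = 0}"

text \<open>E_n(K); on (the null set) N it is set to 0 by convention.\<close>
definition En :: "'a::topological_space measure \<Rightarrow> (nat \<Rightarrow> 'a set) \<Rightarrow> (nat \<Rightarrow> 'a set) \<Rightarrow> nat
    \<Rightarrow> ('a \<Rightarrow> 'a \<Rightarrow> real) \<Rightarrow> 'a \<Rightarrow> 'a \<Rightarrow> real" where
  "En M A U n K u v =
     (if u \<in> Nset M A U \<or> v \<in> Nset M A U then 0
      else (1 / (measure M (Cell A U n u) * measure M (Cell A U n v))) *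
           (\<integral>x\<in>Cell A U n u. (\<integral>y\<in>Cell A U n v. K x y \<partial>M) \<partial>M))"

definition L2 :: "'b measure \<Rightarrow> ('b \<Rightarrow> real) \<Rightarrow> bool" where
  "L2 M f \<longleftrightarrow> f \<in> borel_measurable M \<and> integrable M (\<lambda>x. (f x)\<^sup>2)"

definition L2_pos_def :: "'b measure \<Rightarrow> ('b \<Rightarrow> 'b \<Rightarrow> real) \<Rightarrow> bool" where
  "L2_pos_def M H \<longleftrightarrow> L2 (M \<Otimes>\<^sub>M M) (\<lambda>(x, y). H x y) \<and>
     (\<forall>f. L2 M f \<longrightarrow> 0 \<le> (\<integral>x. (\<integral>y. H x y * f y \<partial>M) * f x \<partial>M))"

end

theory Submission
  imports Defs
begin


definition avg :: "'b measure \<Rightarrow> ('b \<Rightarrow> 'b set) \<Rightarrow> ('b \<Rightarrow> real) \<Rightarrow> 'b \<Rightarrow> real" where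
  "avg M cl h x = (\<integral>y\<in>cl x. h y \<partial>M) / measure M (cl x)"

lemma abs_mult_le_sq: "\<bar>(a::real) * b\<bar> \<le> a\<^sup>2 + b\<^sup>2"
proof -
  have "0 \<le> (\<bar>a\<bar> - \<bar>b\<bar>)\<^sup>2" by simp
  then have 1: "2*(\<bar>a\<bar>*\<bar>b\<bar>) \<le> a\<^sup>2 + b\<^sup>2" by (simp add: power2_diff)
  have h: "0 \<le> \<bar>a\<bar>*\<bar>b\<bar>" by simp
  show ?thesis unfolding abs_mult using 1 h by linarith
qed

lemma L2_mult:
  assumes "L2 M a" "L2 M b" shows "integrable M (\<lambda>x. a x * b x)"
proof -
  have "integrable M (\<lambda>x. (a x)\<^sup>2 + (b x)\<^sup>2)" using assms by (auto simp: L2_def)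
  then show ?thesis
    apply (rule Bochner_Integration.integrable_bound)
    using assms abs_mult_le_sq by (auto simp: L2_def)
qed

lemma L2_indicator:
  assumes "B \<in> sets M" "emeasure M B < \<infinity>"
  shows "L2 M (indicator B)"
proof -
  have "(\<lambda>x. (indicator B x :: real)\<^sup>2) = indicator B" by (auto simp: indicator_def)
  then show ?thesis using assms
    by (auto simp: L2_def integrable_indicator_iff sets.Int_space_eq2)
qed

lemma L2_set_integrable:
  assumes "B \<in> sets M" "emeasure M B < \<infinity>" "L2 M h"
  shows "integrable M (\<lambda>x. indicator B x * h x)"
  using L2_mult[OF L2_indicator[OF assms(1,2)] assms(3)] .

lemma L2_sq_set_integrable:
  assumes "B \<in> sets M" "L2 M h"
  shows "integrable M (\<lambda>x. indicator B x * (h x)\<^sup>2)"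
  using integrable_mult_indicator[OF assms(1), of "\<lambda>x. (h x)\<^sup>2"] assms(2) by (auto simp: L2_def)

lemma CS_cell:
  assumes B: "B \<in> sets M" "emeasure M B < \<infinity>" and h: "L2 M h"
  shows "(\<integral>x\<in>B. h x \<partial>M)\<^sup>2 / measure M B \<le> (\<integral>x\<in>B. (h x)\<^sup>2 \<partial>M)"
proof -
  define I where "I = (\<integral>x\<in>B. h x \<partial>M)"
  define J where "J = (\<integral>x\<in>B. (h x)\<^sup>2 \<partial>M)"
  define m where "m = measure M B"
  have J0: "0 \<le> J" unfolding J_def set_lebesgue_integral_def
    by (auto intro!: integral_nonneg simp: indicator_def)
  show ?thesis
  proof (cases "m = 0")
    case True then show ?thesis using J0 by (simp add: I_def[symmetric] J_def[symmetric] m_def[symmetric])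
  next
    case False
    then have mpos: "m > 0" by (simp add: m_def measure_nonneg order_le_neq_trans)
    define c where "c = I / m"
    have i1: "integrable M (\<lambda>x. indicator B x * h x)" by (rule L2_set_integrable[OF B h])
    have i2: "integrable M (\<lambda>x. indicator B x * (h x)\<^sup>2)" by (rule L2_sq_set_integrable[OF B(1) h])
    have i3: "integrable M (\<lambda>x. indicator B x :: real)" using B by (auto simp: integrable_indicator_iff sets.Int_space_eq2)
    have eq: "(\<lambda>x. indicator B x * (h x - c)\<^sup>2) = (\<lambda>x. indicator B x * (h x)\<^sup>2 - (2*c) * (indicator B x * h x) + c\<^sup>2 * indicator B x)"
      by (auto simp: power2_eq_square algebra_simps)
    have "0 \<le> (\<integral>x. indicator B x * (h x - c)\<^sup>2 \<partial>M)"
      by (auto intro!: integral_nonneg simp: indicator_def)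
    also have "\<dots> = J - (2*c) * I + c\<^sup>2 * m"
      unfolding eq using i1 i2 i3 B
      by (simp add: I_def J_def m_def set_lebesgue_integral_def)
    finally have "0 \<le> J - (2*c) * I + c\<^sup>2 * m" .
    moreover have "c * I = I\<^sup>2 / m" by (simp add: c_def power2_eq_square)
    moreover have "c\<^sup>2 * m = I\<^sup>2 / m" using mpos by (simp add: c_def power2_eq_square)
    ultimately have "I\<^sup>2 / m \<le> J" by linarith
    then show ?thesis by (simp add: I_def J_def m_def)
  qed
qed



definition enumP :: "'b set set \<Rightarrow> nat \<Rightarrow> 'b set" where
  "enumP P i = (if \<exists>j<i. from_nat_into P j = from_nat_into P i then {} else from_nat_into P i)"

locale cellpart =
  fixes M :: "'b measure" and P :: "'b set set" and cl :: "'b \<Rightarrow> 'b set"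
  assumes space: "space M = UNIV"
    and cnt: "countable P"
    and meas: "\<And>B. B \<in> P \<Longrightarrow> B \<in> sets M"
    and fin: "\<And>B. B \<in> P \<Longrightarrow> emeasure M B < \<infinity>"
    and cl_in: "\<And>x. cl x \<in> P"
    and cl_mem: "\<And>x. x \<in> cl x"
    and cl_uniq: "\<And>B x. B \<in> P \<Longrightarrow> x \<in> B \<Longrightarrow> cl x = B"
begin

lemma cl_eq: "x \<in> cl y \<Longrightarrow> cl x = cl y"
  using cl_uniq cl_in by blast

lemma Pne: "P \<noteq> {}" using cl_in by blast

lemma const_meas:
  fixes F :: "'b \<Rightarrow> real"
  assumes "\<And>x y. y \<in> cl x \<Longrightarrow> F y = F x"
  shows "F \<in> borel_measurable M"
proof (rule borel_measurableI)
  fix S :: "real set" assume "open S"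
  have "F -` S \<inter> space M = \<Union>{B\<in>P. \<exists>x\<in>B. F x \<in> S}"
  proof (intro equalityI subsetI)
    fix x assume "x \<in> F -` S \<inter> space M"
    then show "x \<in> \<Union>{B\<in>P. \<exists>x\<in>B. F x \<in> S}" using cl_in cl_mem by blast
  next
    fix y assume "y \<in> \<Union>{B\<in>P. \<exists>x\<in>B. F x \<in> S}"
    then obtain B x where "B \<in> P" "y \<in> B" "x \<in> B" "F x \<in> S" by blast
    then have "cl y = cl x" using cl_uniq by metis
    then have "F y = F x" using assms cl_mem by metis
    then show "y \<in> F -` S \<inter> space M" using \<open>F x \<in> S\<close> space by simp
  qed
  also have "\<dots> \<in> sets M"
  proof (rule sets.countable_Union)
    show "countable {B\<in>P. \<exists>x\<in>B. F x \<in> S}" by (rule countable_subset[OF _ cnt]) blast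
    show "{B\<in>P. \<exists>x\<in>B. F x \<in> S} \<subseteq> sets M" using meas by blast
  qed
  finally show "F -` S \<inter> space M \<in> sets M" .
qed

lemma avg_const: "y \<in> cl x \<Longrightarrow> avg M cl h y = avg M cl h x"
  by (simp add: avg_def cl_eq)

lemma avg_meas: "avg M cl h \<in> borel_measurable M"
  by (rule const_meas) (rule avg_const)

abbreviation "E \<equiv> enumP P"

lemma E_cases: "E i = {} \<or> E i \<in> P"
  using range_from_nat_into[OF Pne cnt] by (auto simp: enumP_def)

lemma E_sets: "E i \<in> sets M"
  using E_cases[of i] meas by auto

lemma E_fin: "emeasure M (E i) < \<infinity>"
  using E_cases[of i] fin by auto

lemma E_cl: "x \<in> E i \<Longrightarrow> cl x = E i"
  using E_cases[of i] cl_uniq by auto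

lemma E_ne:
  assumes ne: "E i \<noteq> {}"
  shows "E i = from_nat_into P i" "\<forall>j<i. from_nat_into P j \<noteq> from_nat_into P i"
proof -
  show nc: "\<forall>j<i. from_nat_into P j \<noteq> from_nat_into P i"
  proof (rule ccontr)
    assume "\<not> (\<forall>j<i. from_nat_into P j \<noteq> from_nat_into P i)"
    then have "\<exists>j<i. from_nat_into P j = from_nat_into P i" by blast
    then have "E i = {}" unfolding enumP_def by (simp only: if_True)
    with ne show False by blast
  qed
  then have "\<not> (\<exists>j<i. from_nat_into P j = from_nat_into P i)" by blast
  then show "E i = from_nat_into P i" unfolding enumP_def by (simp only: if_False)
qed

lemma E_disj: "i \<noteq> j \<Longrightarrow> E i \<inter> E j = {}"
proof (rule ccontr)
  assume ij: "i \<noteq> j" and "E i \<inter> E j \<noteq> {}"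
  then obtain x where x: "x \<in> E i" "x \<in> E j" by blast
  then have "E i = E j" using E_cl by metis
  have ne: "E i \<noteq> {}" "E j \<noteq> {}" using x by blast+
  have eq: "from_nat_into P i = from_nat_into P j"
    using E_ne(1)[OF ne(1)] E_ne(1)[OF ne(2)] \<open>E i = E j\<close> by simp
  show False
  proof (cases "i < j")
    case True then show ?thesis using E_ne(2)[OF ne(2)] eq by blast
  next
    case False then have "j < i" using ij by simp
    then show ?thesis using E_ne(2)[OF ne(1)] eq by metis
  qed
qed

lemma E_disjoint: "disjoint_family E"
  using E_disj by (auto simp: disjoint_family_on_def)

lemma E_Un: "(\<Union>i. E i) = UNIV"
proof (intro equalityI subsetI)
  fix x :: 'b
  have "cl x \<in> range (from_nat_into P)" using range_from_nat_into[OF Pne cnt] cl_in by simp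
  then have ex: "\<exists>i. from_nat_into P i = cl x" by auto
  define i where "i = (LEAST i. from_nat_into P i = cl x)"
  have i: "from_nat_into P i = cl x" unfolding i_def by (rule LeastI_ex[OF ex])
  have "\<forall>j<i. from_nat_into P j \<noteq> cl x" unfolding i_def using not_less_Least by blast
  then have "\<not> (\<exists>j<i. from_nat_into P j = from_nat_into P i)" using i by metis
  then have "E i = cl x" using i unfolding enumP_def by (simp only: if_False)
  then show "x \<in> (\<Union>i. E i)" using cl_mem by blast
next
  fix x assume "x \<in> (\<Union>i. E i)" then show "x \<in> UNIV" by simp
qed

end


context cellpart begin

lemma avg_on_E: "x \<in> E i \<Longrightarrow> avg M cl h x = (\<integral>y\<in>E i. h y \<partial>M) / measure M (E i)"
  by (simp add: avg_def E_cl)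

lemma cell_bound:
  assumes h: "L2 M h"
  shows "(\<integral>\<^sup>+x\<in>E i. ennreal ((avg M cl h x)\<^sup>2) \<partial>M) \<le> (\<integral>\<^sup>+x\<in>E i. ennreal ((h x)\<^sup>2) \<partial>M)"
proof -
  define B where "B = E i"
  define I where "I = (\<integral>y\<in>B. h y \<partial>M)"
  define m where "m = measure M B"
  define c where "c = I / m"
  have B: "B \<in> sets M" "emeasure M B < \<infinity>" using E_sets E_fin by (auto simp: B_def)
  have em: "emeasure M B = ennreal m" unfolding m_def using B by (simp add: emeasure_eq_ennreal_measure)
  have "(\<integral>\<^sup>+x\<in>E i. ennreal ((avg M cl h x)\<^sup>2) \<partial>M) = (\<integral>\<^sup>+x. ennreal (c\<^sup>2) * indicator B x \<partial>M)"
    by (rule nn_integral_cong) (auto simp: indicator_def avg_on_E B_def c_def I_def m_def)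
  also have "\<dots> = ennreal (c\<^sup>2) * emeasure M B" using B by (simp add: nn_integral_cmult_indicator)
  also have "\<dots> = ennreal (c\<^sup>2 * m)" using em by (simp add: ennreal_mult measure_nonneg m_def)
  also have "c\<^sup>2 * m = I\<^sup>2 / m"
    by (cases "m = 0") (simp_all add: c_def power2_eq_square)
  also have "I\<^sup>2 / m \<le> (\<integral>x\<in>B. (h x)\<^sup>2 \<partial>M)"
    unfolding I_def m_def by (rule CS_cell[OF B h])
  also have "ennreal (\<integral>x\<in>B. (h x)\<^sup>2 \<partial>M) = (\<integral>\<^sup>+x. ennreal (indicator B x * (h x)\<^sup>2) \<partial>M)"
    unfolding set_lebesgue_integral_def
    by (subst nn_integral_eq_integral[OF L2_sq_set_integrable[OF B(1) h]]) (auto simp: indicator_def)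
  also have "\<dots> = (\<integral>\<^sup>+x\<in>E i. ennreal ((h x)\<^sup>2) \<partial>M)"
    by (rule nn_integral_cong) (auto simp: indicator_def B_def)
  finally show ?thesis by (simp add: ennreal_leI)
qed

lemma avg_L2:
  assumes h: "L2 M h"
  shows "L2 M (avg M cl h)"
proof -
  have hm[measurable]: "h \<in> borel_measurable M" and hi: "integrable M (\<lambda>x. (h x)\<^sup>2)" using h by (auto simp: L2_def)
  have am[measurable]: "avg M cl h \<in> borel_measurable M" by (rule avg_meas)
  have Fm: "(\<lambda>x. ennreal ((avg M cl h x)\<^sup>2)) \<in> borel_measurable M" by measurable
  have Gm: "(\<lambda>x. ennreal ((h x)\<^sup>2)) \<in> borel_measurable M" by measurable
  have "(\<integral>\<^sup>+x. ennreal ((avg M cl h x)\<^sup>2) \<partial>M) = (\<integral>\<^sup>+x\<in>(\<Union>i. E i). ennreal ((avg M cl h x)\<^sup>2) \<partial>M)"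
    by (simp add: E_Un)
  also have "\<dots> = (\<Sum>i. \<integral>\<^sup>+x\<in>E i. ennreal ((avg M cl h x)\<^sup>2) \<partial>M)"
    by (rule nn_integral_disjoint_family[OF Fm E_sets E_disjoint])
  also have "\<dots> \<le> (\<Sum>i. \<integral>\<^sup>+x\<in>E i. ennreal ((h x)\<^sup>2) \<partial>M)"
    by (rule suminf_le[OF cell_bound[OF h] summableI summableI])
  also have "\<dots> = (\<integral>\<^sup>+x\<in>(\<Union>i. E i). ennreal ((h x)\<^sup>2) \<partial>M)"
    by (rule nn_integral_disjoint_family[OF Gm E_sets E_disjoint, symmetric])
  also have "\<dots> = ennreal (\<integral>x. (h x)\<^sup>2 \<partial>M)"
    using nn_integral_eq_integral[OF hi] by (simp add: E_Un)
  also have "\<dots> < \<infinity>" by simp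
  finally have fin: "(\<integral>\<^sup>+x. ennreal ((avg M cl h x)\<^sup>2) \<partial>M) < \<infinity>" .
  have "integrable M (\<lambda>x. (avg M cl h x)\<^sup>2)"
    unfolding integrable_iff_bounded using fin by simp
  then show ?thesis using am by (simp add: L2_def)
qed

lemma integral_E_sum:
  fixes g :: "'b \<Rightarrow> real"
  assumes g: "integrable M g"
  shows "(\<integral>x. g x \<partial>M) = (\<Sum>i. \<integral>x\<in>E i. g x \<partial>M)"
proof -
  have "(\<integral>x. g x \<partial>M) = (\<integral>x\<in>(\<Union>i. E i). g x \<partial>M)" by (simp add: E_Un set_lebesgue_integral_def)
  also have "\<dots> = (\<Sum>i. \<integral>x\<in>E i. g x \<partial>M)"
  proof (rule lebesgue_integral_countable_add[of E M g])
    show "\<And>i. E i \<in> sets M" by (rule E_sets)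
    show "\<And>i j. i \<noteq> j \<Longrightarrow> E i \<inter> E j = {}" by (rule E_disj)
    show "set_integrable M (\<Union>i. E i) g" using g by (simp add: E_Un set_integrable_def)
  qed
  finally show ?thesis .
qed

lemma avg_sym:
  assumes h: "L2 M h" and f: "L2 M f"
  shows "(\<integral>x. avg M cl h x * f x \<partial>M) = (\<integral>x. h x * avg M cl f x \<partial>M)"
proof -
  have i1: "integrable M (\<lambda>x. avg M cl h x * f x)" by (rule L2_mult[OF avg_L2[OF h] f])
  have i2: "integrable M (\<lambda>x. h x * avg M cl f x)" by (rule L2_mult[OF h avg_L2[OF f]])
  have tm: "(\<integral>x\<in>E i. avg M cl h x * f x \<partial>M) = (\<integral>x\<in>E i. h x * avg M cl f x \<partial>M)" for i
  proof -
    define B where "B = E i"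
    define Ih where "Ih = (\<integral>y\<in>B. h y \<partial>M)"
    define If where "If = (\<integral>y\<in>B. f y \<partial>M)"
    define m where "m = measure M B"
    have "(\<integral>x\<in>E i. avg M cl h x * f x \<partial>M) = (\<integral>x\<in>E i. (Ih/m) * f x \<partial>M)"
      by (rule set_lebesgue_integral_cong) (auto simp: E_sets avg_on_E B_def Ih_def m_def)
    also have "\<dots> = (Ih/m) * If" by (simp add: If_def B_def)
    also have "\<dots> = Ih * (If/m)" by simp
    also have "\<dots> = (\<integral>x\<in>E i. h x * (If/m) \<partial>M)" by (simp add: Ih_def B_def)
    also have "\<dots> = (\<integral>x\<in>E i. h x * avg M cl f x \<partial>M)"
      by (rule set_lebesgue_integral_cong) (auto simp: E_sets avg_on_E B_def If_def m_def)
    finally show ?thesis .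
  qed
  show ?thesis by (simp add: integral_E_sum[OF i1] integral_E_sum[OF i2] tm)
qed

end


lemma (in pair_sigma_finite) integrable_prod_mult:
  fixes a b :: "_ \<Rightarrow> real"
  assumes a: "integrable M1 a" and b: "integrable M2 b"
  shows "integrable (M1 \<Otimes>\<^sub>M M2) (\<lambda>p. a (fst p) * b (snd p))"
proof (rule Fubini_integrable)
  have [measurable]: "a \<in> borel_measurable M1" "b \<in> borel_measurable M2" using a b by auto
  show "(\<lambda>p. a (fst p) * b (snd p)) \<in> borel_measurable (M1 \<Otimes>\<^sub>M M2)" by measurable
  have "(\<lambda>x. \<integral>y. norm (a (fst (x, y)) * b (snd (x, y))) \<partial>M2) = (\<lambda>x. \<bar>a x\<bar> * (\<integral>y. \<bar>b y\<bar> \<partial>M2))"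
    by (simp add: abs_mult)
  moreover have "integrable M1 (\<lambda>x. \<bar>a x\<bar> * (\<integral>y. \<bar>b y\<bar> \<partial>M2))"
    using a by (intro integrable_mult_left) auto
  ultimately show "integrable M1 (\<lambda>x. \<integral>y. norm (a (fst (x, y)) * b (snd (x, y))) \<partial>M2)" by simp
  show "AE x in M1. integrable M2 (\<lambda>y. a (fst (x, y)) * b (snd (x, y)))"
    using b by (auto intro: integrable_mult_right)
qed

lemma (in pair_sigma_finite) integral_prod_mult:
  fixes a b :: "_ \<Rightarrow> real"
  assumes a: "integrable M1 a" and b: "integrable M2 b"
  shows "(\<integral>p. a (fst p) * b (snd p) \<partial>(M1 \<Otimes>\<^sub>M M2)) = (\<integral>x. a x \<partial>M1) * (\<integral>y. b y \<partial>M2)"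
proof -
  have "(\<integral>p. a (fst p) * b (snd p) \<partial>(M1 \<Otimes>\<^sub>M M2)) = (\<integral>x. (\<integral>y. a (fst (x,y)) * b (snd (x,y)) \<partial>M2) \<partial>M1)"
    by (rule integral_fst'[OF integrable_prod_mult[OF a b], symmetric])
  also have "\<dots> = (\<integral>x. a x \<partial>M1) * (\<integral>y. b y \<partial>M2)" by simp
  finally show ?thesis .
qed

lemma cellpart_prod:
  assumes cp: "cellpart M P cl" and sf: "sigma_finite_measure M"
  shows "cellpart (M \<Otimes>\<^sub>M M) ((\<lambda>(B,C). B \<times> C) ` (P \<times> P)) (\<lambda>p. cl (fst p) \<times> cl (snd p))"
proof -
  interpret cellpart M P cl by (rule cp)
  interpret sigma_finite_measure M by (rule sf)
  show ?thesis
  proof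
    show "space (M \<Otimes>\<^sub>M M) = UNIV" by (simp add: space_pair_measure space)
    show "countable ((\<lambda>(B,C). B \<times> C) ` (P \<times> P))" using cnt by simp
    show "Q \<in> sets (M \<Otimes>\<^sub>M M)" if "Q \<in> (\<lambda>(B,C). B \<times> C) ` (P \<times> P)" for Q
      using that meas by auto
    show "emeasure (M \<Otimes>\<^sub>M M) Q < \<infinity>" if Qin: "Q \<in> (\<lambda>(B,C). B \<times> C) ` (P \<times> P)" for Q
    proof -
      obtain B C where "B \<in> P" "C \<in> P" "Q = B \<times> C" using Qin(1) by auto
      then show ?thesis using meas fin
        by (simp add: emeasure_pair_measure_Times ennreal_mult_less_top)
    qed
    show "cl (fst p) \<times> cl (snd p) \<in> (\<lambda>(B,C). B \<times> C) ` (P \<times> P)" for p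
      using cl_in by auto
    show "p \<in> cl (fst p) \<times> cl (snd p)" for p
      using cl_mem by (cases p) auto
    show "cl (fst p) \<times> cl (snd p) = Q" if Qin: "Q \<in> (\<lambda>(B,C). B \<times> C) ` (P \<times> P)" "p \<in> Q" for Q p
    proof -
      obtain B C where "B \<in> P" "C \<in> P" "Q = B \<times> C" using Qin(1) by auto
      then show ?thesis using Qin(2) cl_uniq by (cases p) auto
    qed
  qed
qed

lemma measure_Times:
  assumes sf: "sigma_finite_measure M" and B: "B \<in> sets M" and C: "C \<in> sets M"
  shows "measure (M \<Otimes>\<^sub>M M) (B \<times> C) = measure M B * measure M C"
proof -
  interpret sigma_finite_measure M by (rule sf)
  show ?thesis using B C
    by (simp add: measure_def emeasure_pair_measure_Times enn2real_mult)
qed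

lemma avg_prod_split:
  assumes cp: "cellpart M P cl" and sf: "sigma_finite_measure M" and f: "L2 M f"
  shows "avg (M \<Otimes>\<^sub>M M) (\<lambda>p. cl (fst p) \<times> cl (snd p)) (\<lambda>p. f (fst p) * f (snd p)) q
       = avg M cl f (fst q) * avg M cl f (snd q)"
proof -
  interpret cellpart M P cl by (rule cp)
  interpret pair_sigma_finite M M using sf by (simp add: pair_sigma_finite_def)
  define B where "B = cl (fst q)"
  define C where "C = cl (snd q)"
  have B: "B \<in> sets M" "emeasure M B < \<infinity>" using meas fin cl_in by (auto simp: B_def)
  have C: "C \<in> sets M" "emeasure M C < \<infinity>" using meas fin cl_in by (auto simp: C_def)
  have "(\<integral>p\<in>B \<times> C. f (fst p) * f (snd p) \<partial>(M \<Otimes>\<^sub>M M))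
      = (\<integral>p. (indicator B (fst p) * f (fst p)) * (indicator C (snd p) * f (snd p)) \<partial>(M \<Otimes>\<^sub>M M))"
    unfolding set_lebesgue_integral_def
    by (rule Bochner_Integration.integral_cong) (auto simp: indicator_def)
  also have "\<dots> = (\<integral>x\<in>B. f x \<partial>M) * (\<integral>x\<in>C. f x \<partial>M)"
    unfolding set_lebesgue_integral_def
    using integral_prod_mult[OF L2_set_integrable[OF B f] L2_set_integrable[OF C f]] by simp
  finally have I: "(\<integral>p\<in>B \<times> C. f (fst p) * f (snd p) \<partial>(M \<Otimes>\<^sub>M M))
      = (\<integral>x\<in>B. f x \<partial>M) * (\<integral>x\<in>C. f x \<partial>M)" .
  have m: "measure (M \<Otimes>\<^sub>M M) (B \<times> C) = measure M B * measure M C"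
    by (rule measure_Times[OF sf B(1) C(1)])
  show ?thesis unfolding avg_def B_def[symmetric] C_def[symmetric] I m by simp
qed



lemma closure_UN_lessThan:
  fixes k :: nat
  shows "closure (\<Union>j<k. A j) = (\<Union>j<k. closure (A j))"
  by (induction k) (simp_all add: lessThan_Suc)

lemma Part_sets:
  assumes oA: "\<And>k. open (A k)" and oU: "\<And>m. open (U m)"
  shows "B \<in> Part A U n \<Longrightarrow> B \<in> sets borel"
proof (induction n arbitrary: B)
  case 0
  then obtain k where k: "B = A k - closure (\<Union>j<k. A j) \<or> B = frontier (A k) - closure (\<Union>j<k. A j)"
    unfolding Part.simps P0_def by blast
  have "A k \<in> sets borel" using oA by simp
  moreover have "frontier (A k) \<in> sets borel" by (simp add: borel_closed)
  moreover have "closure (\<Union>j<k. A j) \<in> sets borel" by (simp add: borel_closed)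
  ultimately show ?case using k by auto
next
  case (Suc n)
  then obtain C W where C: "C \<in> Part A U n" "W \<in> {U n, UNIV - closure (U n), frontier (U n)}" "B = W \<inter> C"
    by auto
  have "U n \<in> sets borel" using oU by simp
  moreover have "UNIV - closure (U n) \<in> sets borel" by (simp add: borel_open)
  moreover have "frontier (U n) \<in> sets borel" by (simp add: borel_closed)
  ultimately have "W \<in> sets borel" using C(2) by auto
  then show ?case using C Suc.IH by auto
qed

lemma Part_countable: "countable (Part A U n)"
proof (induction n)
  case 0
  then show ?case by (auto simp: P0_def intro!: countable_UN)
next
  case (Suc n)
  then show ?case by (auto intro!: countable_UN)
qed

lemma Part_sub0: "B \<in> Part A U n \<Longrightarrow> \<exists>k. B \<subseteq> closure (A k)"
proof (induction n arbitrary: B)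
  case 0
  then show ?case
    by (auto simp: P0_def frontier_def dest: closure_subset[THEN subsetD])
next
  case (Suc n)
  then obtain B' where "B' \<in> Part A U n" "B \<subseteq> B'" by auto
  then show ?case using Suc.IH by blast
qed

lemma P0_exists:
  assumes oA: "\<And>k. open (A k)" and cover: "(\<Union>k. A k) = UNIV"
  shows "\<exists>B\<in>P0 A. x \<in> B"
proof -
  have ex: "\<exists>k. x \<in> closure (A k)" using cover closure_subset by blast
  define k where "k = (LEAST k. x \<in> closure (A k))"
  have k: "x \<in> closure (A k)" unfolding k_def by (rule LeastI_ex[OF ex])
  have "\<forall>j<k. x \<notin> closure (A j)" unfolding k_def using not_less_Least by blast
  then have nk: "x \<notin> closure (\<Union>j<k. A j)" by (simp add: closure_UN_lessThan)
  have "x \<in> A k \<or> x \<in> frontier (A k)" using k oA by (auto simp: frontier_def interior_open)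
  then show ?thesis using nk unfolding P0_def by blast
qed

lemma P0_unique:
  assumes oA: "\<And>k. open (A k)"
    and B1: "B1 \<in> P0 A" and B2: "B2 \<in> P0 A" and x: "x \<in> B1" "x \<in> B2"
  shows "B1 = B2"
proof -
  have shape: "\<exists>k. (B = A k - closure (\<Union>j<k. A j) \<or> B = frontier (A k) - closure (\<Union>j<k. A j))"
    if "B \<in> P0 A" for B using that unfolding P0_def by blast
  obtain k1 where k1: "B1 = A k1 - closure (\<Union>j<k1. A j) \<or> B1 = frontier (A k1) - closure (\<Union>j<k1. A j)"
    using shape[OF B1] by blast
  obtain k2 where k2: "B2 = A k2 - closure (\<Union>j<k2. A j) \<or> B2 = frontier (A k2) - closure (\<Union>j<k2. A j)"
    using shape[OF B2] by blast
  have sub: "B \<subseteq> closure (A k)" if "B = A k - closure (\<Union>j<k. A j) \<or> B = frontier (A k) - closure (\<Union>j<k. A j)" for B k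
    using that closure_subset by (auto simp: frontier_def)
  have nin: "x \<notin> closure (A j)" if "j < k" "B = A k - closure (\<Union>j<k. A j) \<or> B = frontier (A k) - closure (\<Union>j<k. A j)" "x \<in> B" for B k j
    using that by (auto simp: closure_UN_lessThan)
  have "k1 = k2"
  proof (rule ccontr)
    assume "k1 \<noteq> k2"
    then have "k1 < k2 \<or> k2 < k1" by arith
    then show False
    proof
      assume "k1 < k2"
      then show False using nin[OF _ k2 x(2)] sub[OF k1] x(1) by blast
    next
      assume "k2 < k1"
      then show False using nin[OF _ k1 x(1)] sub[OF k2] x(2) by blast
    qed
  qed
  moreover have "A k \<inter> frontier (A k) = {}" for k using oA[of k] by (auto simp: frontier_def interior_open)
  ultimately show ?thesis using k1 k2 x by blast
qed

locale partsetup =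
  fixes A U :: "nat \<Rightarrow> 'a::topological_space set"
  assumes oA: "\<And>k. open (A k)" and oU: "\<And>m. open (U m)" and cover: "(\<Union>k. A k) = UNIV"
begin

lemma Part_unique:
  shows "B1 \<in> Part A U n \<Longrightarrow> B2 \<in> Part A U n \<Longrightarrow> x \<in> B1 \<Longrightarrow> x \<in> B2 \<Longrightarrow> B1 = B2"
proof (induction n arbitrary: B1 B2)
  case 0
  then show ?case using P0_unique[of A, OF oA] by simp
next
  case (Suc n)
  obtain C1 W1 where C1: "C1 \<in> Part A U n" "W1 \<in> {U n, UNIV - closure (U n), frontier (U n)}" "B1 = W1 \<inter> C1"
    using Suc.prems(1) by auto
  obtain C2 W2 where C2: "C2 \<in> Part A U n" "W2 \<in> {U n, UNIV - closure (U n), frontier (U n)}" "B2 = W2 \<inter> C2"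
    using Suc.prems(2) by auto
  have "C1 = C2" using Suc.IH[OF C1(1) C2(1)] C1(3) C2(3) Suc.prems(3,4) by blast
  moreover have "W1 = W2"
    using C1(2) C2(2) C1(3) C2(3) Suc.prems(3,4) oU[of n] closure_subset[of "U n"]
    by (auto simp: frontier_def interior_open)
  ultimately show ?case using C1(3) C2(3) by simp
qed

lemma Part_exists:
  shows "\<exists>B\<in>Part A U n. x \<in> B"
proof (induction n)
  case 0
  then show ?case using P0_exists[of A, OF oA cover] by simp
next
  case (Suc n)
  then obtain C where C: "C \<in> Part A U n" "x \<in> C" by blast
  have "x \<in> U n \<or> x \<in> UNIV - closure (U n) \<or> x \<in> frontier (U n)"
    using oU[of n] by (auto simp: frontier_def interior_open)
  then show ?case using C by auto
qed

lemma Cell_props: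
  shows "Cell A U n x \<in> Part A U n \<and> x \<in> Cell A U n x"
proof -
  have "\<exists>!B. B \<in> Part A U n \<and> x \<in> B"
    using Part_exists Part_unique by blast
  then show ?thesis unfolding Cell_def by (rule theI')
qed

lemma Cell_uniq:
  assumes "B \<in> Part A U n" "x \<in> B"
  shows "Cell A U n x = B"
  using Cell_props[of n x] Part_unique assms by blast

end

lemma compact_finite_measure:
  assumes borel: "sets M = sets borel"
    and loc_fin: "\<And>x. \<exists>V. open V \<and> x \<in> V \<and> emeasure M V < \<infinity>"
    and C: "compact (C :: 'a::t2_space set)"
  shows "emeasure M C < \<infinity>"
proof -
  obtain V where V: "\<And>x. open (V x)" "\<And>x. x \<in> V x" "\<And>x. emeasure M (V x) < \<infinity>"
    using loc_fin by metis
  have "C \<subseteq> (\<Union>c\<in>C. V c)" using V(2) by blast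
  then obtain C' where C': "C' \<subseteq> C" "finite C'" "C \<subseteq> (\<Union>c\<in>C'. V c)"
    using compactE_image[OF C, of C V] V(1) by metis
  have sV: "V c \<in> sets M" for c using V(1) borel by simp
  have sC: "C \<in> sets M" using borel compact_imp_closed[OF C] by simp
  have "emeasure M C \<le> emeasure M (\<Union>c\<in>C'. V c)"
    using C'(3) sC sV C'(2) by (intro emeasure_mono) auto
  also have "\<dots> \<le> (\<Sum>c\<in>C'. emeasure M (V c))"
    using C'(2) sV by (intro emeasure_subadditive_finite) auto
  also have "\<dots> < \<infinity>" using C'(2) V(3) by simp
  finally show ?thesis .
qed



lemma L2_prod_self:
  assumes sf: "sigma_finite_measure M" and f: "L2 M f"
  shows "L2 (M \<Otimes>\<^sub>M M) (\<lambda>p. f (fst p) * f (snd p))"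
proof -
  interpret pair_sigma_finite M M using sf by (simp add: pair_sigma_finite_def)
  have [measurable]: "f \<in> borel_measurable M" using f by (simp add: L2_def)
  have i: "integrable M (\<lambda>x. (f x)\<^sup>2)" using f by (simp add: L2_def)
  have "integrable (M \<Otimes>\<^sub>M M) (\<lambda>p. (f (fst p))\<^sup>2 * (f (snd p))\<^sup>2)"
    by (rule integrable_prod_mult[OF i i])
  then have "integrable (M \<Otimes>\<^sub>M M) (\<lambda>p. (f (fst p) * f (snd p))\<^sup>2)"
    by (simp add: power_mult_distrib)
  moreover have "(\<lambda>p. f (fst p) * f (snd p)) \<in> borel_measurable (M \<Otimes>\<^sub>M M)" by measurable
  ultimately show ?thesis by (simp add: L2_def)
qed

theorem theorem3p10:
  fixes M :: "'a::{t2_space, second_countable_topology} measure"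
    and A U :: "nat \<Rightarrow> 'a set"
    and K :: "'a \<Rightarrow> 'a \<Rightarrow> real"
    and n :: nat
  assumes loc_compact: "locally_compact_space (euclidean :: 'a topology)"
    and borel: "sets M = sets borel"
    and nondeg: "\<And>V. open V \<Longrightarrow> V \<noteq> {} \<Longrightarrow> emeasure M V > 0"
    and sigma_fin: "sigma_finite_measure M"
    and loc_fin: "\<And>x. \<exists>V. open V \<and> x \<in> V \<and> emeasure M V < \<infinity>"
    and cover_int: "\<And>k. \<exists>C. compact C \<and> A k = interior C"
    and cover_fin: "\<And>k. emeasure M (A k) < \<infinity>"
    and cover: "(\<Union>k. A k) = UNIV"
    and base: "topological_basis (range U)"
    and K_pd: "L2_pos_def M K"
    and n: "n \<ge> 1"
  shows "L2_pos_def M (En M A U n K)"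
proof -
  have space: "space M = UNIV" using sets_eq_imp_space_eq[OF borel] by simp
  have oA: "\<And>k. open (A k)" using cover_int by (metis open_interior)
  have oU: "\<And>m. open (U m)" using base topological_basis_open by blast
  interpret ps: partsetup A U using oA oU cover by unfold_locales
  have cellsets: "B \<in> sets M" if "B \<in> Part A U m" for B m
    using Part_sets[of A U, OF oA oU that] borel by simp
  have cellfin: "emeasure M B < \<infinity>" if Bin: "B \<in> Part A U m" for B m
  proof -
    obtain k where k: "B \<subseteq> closure (A k)" using Part_sub0[OF Bin] by blast
    obtain C where C: "compact C" "A k = interior C" using cover_int by blast
    have "closure (A k) \<subseteq> C"
      using C closure_mono[OF interior_subset[of C]] closure_closed[OF compact_imp_closed[OF C(1)]] by simp
    then have "B \<subseteq> C" using k by blast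
    moreover have "C \<in> sets M" using borel compact_imp_closed[OF C(1)] by simp
    ultimately have "emeasure M B \<le> emeasure M C" by (intro emeasure_mono)
    also have "\<dots> < \<infinity>" by (rule compact_finite_measure[OF borel loc_fin C(1)])
    finally show ?thesis .
  qed
  interpret cp: cellpart M "Part A U n" "Cell A U n"
  proof
    show "space M = UNIV" by (rule space)
    show "countable (Part A U n)" by (rule Part_countable)
    show "\<And>B. B \<in> Part A U n \<Longrightarrow> B \<in> sets M" using cellsets by blast
    show "\<And>B. B \<in> Part A U n \<Longrightarrow> emeasure M B < \<infinity>" using cellfin by blast
    show "\<And>x. Cell A U n x \<in> Part A U n" using ps.Cell_props by blast
    show "\<And>x. x \<in> Cell A U n x" using ps.Cell_props by blast
    show "\<And>B x. B \<in> Part A U n \<Longrightarrow> x \<in> B \<Longrightarrow> Cell A U n x = B" using ps.Cell_uniq by blast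
  qed
  interpret sf: sigma_finite_measure M by (rule sigma_fin)
  interpret psf: pair_sigma_finite M M by (simp add: pair_sigma_finite_def sigma_fin)
  define cl2 where "cl2 = (\<lambda>p. Cell A U n (fst p) \<times> Cell A U n (snd p))"
  define P2 where "P2 = (\<lambda>(B,C). B \<times> C) ` (Part A U n \<times> Part A U n)"
  interpret cp2: cellpart "M \<Otimes>\<^sub>M M" P2 cl2
    unfolding P2_def cl2_def by (rule cellpart_prod[OF cp.cellpart_axioms sigma_fin])
  define N where "N = Nset M A U"
  have Neq: "N = (\<Union>m. \<Union>B\<in>{B\<in>Part A U m. emeasure M B = 0}. B)"
  proof (intro equalityI subsetI)
    fix x assume "x \<in> N"
    then obtain m where "emeasure M (Cell A U m x) = 0" by (auto simp: N_def Nset_def)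
    then show "x \<in> (\<Union>m. \<Union>B\<in>{B\<in>Part A U m. emeasure M B = 0}. B)"
      using ps.Cell_props[of m x] by blast
  next
    fix x assume "x \<in> (\<Union>m. \<Union>B\<in>{B\<in>Part A U m. emeasure M B = 0}. B)"
    then obtain m B where "B \<in> Part A U m" "emeasure M B = 0" "x \<in> B" by blast
    then have "emeasure M (Cell A U m x) = 0" using ps.Cell_uniq by metis
    then show "x \<in> N" by (auto simp: N_def Nset_def)
  qed
  have N_null: "N \<in> null_sets M"
    unfolding Neq
  proof (rule null_sets_UN')
    fix m :: nat
    show "(\<Union>B\<in>{B\<in>Part A U m. emeasure M B = 0}. B) \<in> null_sets M"
    proof (rule null_sets_UN')
      show "countable {B\<in>Part A U m. emeasure M B = 0}"
        by (rule countable_subset[OF _ Part_countable]) blast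
      show "B \<in> null_sets M" if "B \<in> {B\<in>Part A U m. emeasure M B = 0}" for B
        using that cellsets by (auto intro: null_setsI)
    qed
  qed simp
  have Nsets: "N \<in> sets M" using N_null by auto
  define K2 where "K2 = (\<lambda>(x,y). K x y)"
  have K2L2: "L2 (M \<Otimes>\<^sub>M M) K2" using K_pd by (simp add: L2_pos_def_def K2_def)
  define E2 where "E2 = (\<lambda>(u,v). En M A U n K u v)"
  have En_eq: "En M A U n K u v = (if u \<in> N \<or> v \<in> N then 0 else avg (M \<Otimes>\<^sub>M M) cl2 K2 (u,v))" for u v
  proof (cases "u \<in> N \<or> v \<in> N")
    case True then show ?thesis by (simp add: En_def N_def)
  next
    case False
    define B where "B = Cell A U n u"
    define C where "C = Cell A U n v"
    have BC: "cl2 (u,v) = B \<times> C" by (simp add: cl2_def B_def C_def)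
    have B: "B \<in> sets M" using cp.meas cp.cl_in by (simp add: B_def)
    have C: "C \<in> sets M" using cp.meas cp.cl_in by (simp add: C_def)
    have BCs: "B \<times> C \<in> sets (M \<Otimes>\<^sub>M M)" using cp2.meas cp2.cl_in BC by metis
    have BCf: "emeasure (M \<Otimes>\<^sub>M M) (B \<times> C) < \<infinity>" using cp2.fin cp2.cl_in BC by metis
    have int: "integrable (M \<Otimes>\<^sub>M M) (\<lambda>q. indicator (B \<times> C) q * K2 q)"
      by (rule L2_set_integrable[OF BCs BCf K2L2])
    have "(\<integral>q\<in>B \<times> C. K2 q \<partial>(M \<Otimes>\<^sub>M M)) = (\<integral>q. indicator (B \<times> C) q * K2 q \<partial>(M \<Otimes>\<^sub>M M))"
      by (simp add: set_lebesgue_integral_def)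
    also have "\<dots> = (\<integral>x. (\<integral>y. indicator (B \<times> C) (x,y) * K2 (x,y) \<partial>M) \<partial>M)"
      by (rule psf.integral_fst'[OF int, symmetric])
    also have "\<dots> = (\<integral>x. indicator B x * (\<integral>y. indicator C y * K x y \<partial>M) \<partial>M)"
    proof (rule Bochner_Integration.integral_cong[OF refl])
      fix x
      have "(\<lambda>y. indicator (B \<times> C) (x,y) * K2 (x,y)) = (\<lambda>y. indicator B x * (indicator C y * K x y))"
        by (simp add: K2_def indicator_times fun_eq_iff)
      then show "(\<integral>y. indicator (B \<times> C) (x,y) * K2 (x,y) \<partial>M) = indicator B x * (\<integral>y. indicator C y * K x y \<partial>M)"
        by (simp only: integral_mult_right_zero)
    qed
    also have "\<dots> = (\<integral>x\<in>B. (\<integral>y\<in>C. K x y \<partial>M) \<partial>M)"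
      by (simp add: set_lebesgue_integral_def)
    finally have I: "(\<integral>q\<in>B \<times> C. K2 q \<partial>(M \<Otimes>\<^sub>M M)) = (\<integral>x\<in>B. (\<integral>y\<in>C. K x y \<partial>M) \<partial>M)" .
    have m: "measure (M \<Otimes>\<^sub>M M) (B \<times> C) = measure M B * measure M C"
      by (rule measure_Times[OF sigma_fin B C])
    show ?thesis using False
      by (simp add: En_def N_def[symmetric] avg_def BC I m B_def[symmetric] C_def[symmetric])
  qed
  define N2 where "N2 = N \<times> UNIV \<union> UNIV \<times> N"
  have N2_null: "N2 \<in> null_sets (M \<Otimes>\<^sub>M M)"
  proof -
    have s1: "N \<times> UNIV \<in> sets (M \<Otimes>\<^sub>M M)" using Nsets space
      by (metis pair_measureI sets.top)
    have s2: "UNIV \<times> N \<in> sets (M \<Otimes>\<^sub>M M)" using Nsets space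
      by (metis pair_measureI sets.top)
    have "emeasure (M \<Otimes>\<^sub>M M) (N \<times> UNIV) = 0"
      using Nsets N_null space by (metis sets.top sf.emeasure_pair_measure_Times mult_zero_left null_setsD1)
    moreover have "emeasure (M \<Otimes>\<^sub>M M) (UNIV \<times> N) = 0"
      using Nsets N_null space by (metis sets.top sf.emeasure_pair_measure_Times mult_zero_right null_setsD1)
    ultimately show ?thesis using s1 s2 unfolding N2_def by (auto intro: null_setsI)
  qed
  have N2s: "N2 \<in> sets (M \<Otimes>\<^sub>M M)" using N2_null by auto
  have E2_eq: "E2 = (\<lambda>p. if p \<in> N2 then 0 else avg (M \<Otimes>\<^sub>M M) cl2 K2 p)"
    by (auto simp: E2_def N2_def En_eq fun_eq_iff)
  have avgK_L2: "L2 (M \<Otimes>\<^sub>M M) (avg (M \<Otimes>\<^sub>M M) cl2 K2)" by (rule cp2.avg_L2[OF K2L2])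
  have avgK_meas: "avg (M \<Otimes>\<^sub>M M) cl2 K2 \<in> borel_measurable (M \<Otimes>\<^sub>M M)" by (rule cp2.avg_meas)
  have E2_meas: "E2 \<in> borel_measurable (M \<Otimes>\<^sub>M M)"
    unfolding E2_eq by (rule measurable_If_set[OF measurable_const avgK_meas]) (simp_all add: sets.Int[OF N2s sets.top])
  have AEeq: "AE p in M \<Otimes>\<^sub>M M. E2 p = avg (M \<Otimes>\<^sub>M M) cl2 K2 p"
    by (rule AE_I'[OF N2_null]) (auto simp: E2_eq)
  have E2L2: "L2 (M \<Otimes>\<^sub>M M) E2"
  proof -
    have i1: "integrable (M \<Otimes>\<^sub>M M) (\<lambda>p. (avg (M \<Otimes>\<^sub>M M) cl2 K2 p)\<^sup>2)" using avgK_L2 by (simp add: L2_def)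
    have ae: "AE p in M \<Otimes>\<^sub>M M. (avg (M \<Otimes>\<^sub>M M) cl2 K2 p)\<^sup>2 = (E2 p)\<^sup>2" using AEeq by auto
    have [measurable]: "E2 \<in> borel_measurable (M \<Otimes>\<^sub>M M)" by (rule E2_meas)
    have "integrable (M \<Otimes>\<^sub>M M) (\<lambda>p. (E2 p)\<^sup>2)"
      by (rule integrable_cong_AE_imp[OF i1 _ ae]) measurable
    then show ?thesis using E2_meas by (simp add: L2_def)
  qed
  have pos: "0 \<le> (\<integral>x. (\<integral>y. En M A U n K x y * f y \<partial>M) * f x \<partial>M)" if fL2: "L2 M f" for f
  proof -
    have [measurable]: "f \<in> borel_measurable M" using fL2 by (simp add: L2_def)
    define g where "g = avg M (Cell A U n) f"
    have gL2: "L2 M g" unfolding g_def by (rule cp.avg_L2[OF fL2])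
    define ff where "ff = (\<lambda>p. f (fst p) * f (snd p))"
    have ffL2: "L2 (M \<Otimes>\<^sub>M M) ff" unfolding ff_def by (rule L2_prod_self[OF sigma_fin fL2])
    have ggL2: "L2 (M \<Otimes>\<^sub>M M) (\<lambda>p. g (fst p) * g (snd p))" by (rule L2_prod_self[OF sigma_fin gL2])
    have int1: "integrable (M \<Otimes>\<^sub>M M) (\<lambda>p. E2 p * ff p)" by (rule L2_mult[OF E2L2 ffL2])
    have int2: "integrable (M \<Otimes>\<^sub>M M) (\<lambda>p. K2 p * (g (fst p) * g (snd p)))" by (rule L2_mult[OF K2L2 ggL2])
    have ffm: "ff \<in> borel_measurable (M \<Otimes>\<^sub>M M)" using ffL2 by (simp add: L2_def)
    have "(\<integral>x. (\<integral>y. En M A U n K x y * f y \<partial>M) * f x \<partial>M)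
        = (\<integral>x. (\<integral>y. E2 (x,y) * ff (x,y) \<partial>M) \<partial>M)"
    proof (rule Bochner_Integration.integral_cong[OF refl])
      fix x
      have "(\<lambda>y. E2 (x,y) * ff (x,y)) = (\<lambda>y. (En M A U n K x y * f y) * f x)"
        by (simp add: E2_def ff_def fun_eq_iff mult_ac)
      then show "(\<integral>y. En M A U n K x y * f y \<partial>M) * f x = (\<integral>y. E2 (x,y) * ff (x,y) \<partial>M)"
        by (simp only: integral_mult_left_zero)
    qed
    also have "\<dots> = (\<integral>p. E2 p * ff p \<partial>(M \<Otimes>\<^sub>M M))"
      by (rule psf.integral_fst'[OF int1])
    also have "\<dots> = (\<integral>p. avg (M \<Otimes>\<^sub>M M) cl2 K2 p * ff p \<partial>(M \<Otimes>\<^sub>M M))"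
      by (rule integral_cong_AE) (use E2_meas avgK_meas ffm AEeq in auto)
    also have "\<dots> = (\<integral>p. K2 p * avg (M \<Otimes>\<^sub>M M) cl2 ff p \<partial>(M \<Otimes>\<^sub>M M))"
      by (rule cp2.avg_sym[OF K2L2 ffL2])
    also have "\<dots> = (\<integral>p. K2 p * (g (fst p) * g (snd p)) \<partial>(M \<Otimes>\<^sub>M M))"
      using avg_prod_split[OF cp.cellpart_axioms sigma_fin fL2]
      by (simp add: cl2_def ff_def g_def)
    also have "\<dots> = (\<integral>x. (\<integral>y. K2 (x,y) * (g x * g y) \<partial>M) \<partial>M)"
      using psf.integral_fst'[OF int2] by simp
    also have "\<dots> = (\<integral>x. (\<integral>y. K x y * g y \<partial>M) * g x \<partial>M)"
    proof (rule Bochner_Integration.integral_cong[OF refl])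
      fix x
      have "(\<lambda>y. K2 (x,y) * (g x * g y)) = (\<lambda>y. (K x y * g y) * g x)"
        by (simp add: K2_def fun_eq_iff mult_ac)
      then show "(\<integral>y. K2 (x,y) * (g x * g y) \<partial>M) = (\<integral>y. K x y * g y \<partial>M) * g x"
        by (simp only: integral_mult_left_zero)
    qed
    also have "\<dots> \<ge> 0" using K_pd gL2 by (simp add: L2_pos_def_def)
    finally show ?thesis .
  qed
  have "L2 (M \<Otimes>\<^sub>M M) (\<lambda>(x, y). En M A U n K x y)" using E2L2 by (simp add: E2_def)
  then show ?thesis using pos by (simp add: L2_pos_def_def)
qed


end
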